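(* Suppose Assumptions 1–6 hold. Then $$\inf_{\boldsymbol\lambda\in\Theta_{\alpha,T}}\{(\boldsymbol\lambda-Z_{T\alpha})'\mathcal I_\alpha(\boldsymbol\lambda-Z_{T\alpha})\}=\inf_{\boldsymbol\lambda\in\Lambda}\{(\boldsymbol\lambda-Z_{T\alpha})'\mathcal I_\alpha(\boldsymbol\lambda-Z_{T\alpha})\}+o_{p\alpha}(1).$$
   Context: Setting. Fix an integer $p\ge1$. $\{y_t\}$ is a real-valued time series observed for $t=-p+1,\dots,T$; write $\boldsymbol y_{t-1}=(y_{t-1},\dots,y_{t-p})$ and $\mathcal F_t=\sigma(y_s,\ s\le t)$. For $\tilde\phi=(\tilde\phi_0,\tilde\phi_1,\dots,\tilde\phi_p,\tilde\sigma^2)\in\mathbb R^{p+1}\times(0,\infty)$ let $f_t(\tilde\phi)=\tilde\sigma^{-1}\mathfrak N\big((y_t-\tilde\phi_0-\sum_{i=1}^p\tilde\phi_iy_{t-i})/\tilde\sigma\big)$ with $\mathfrak N(u)=(2\pi)^{-1/2}e^{-u^2/2}$; $\nabla f_t$ denotes the gradient with respect to $\tilde\phi$. Integers $q_1\ge0$, $q_2\ge1$ with $q_1+q_2=p+2$ and a known $(p+2)\times(p+2)$ permutation matrix $P$ are fixed; for $\beta\in\mathbb R^{q_1},\phi\in\mathbb R^{q_2}$ write $f_t(\beta,\phi)=f_t(P^{-1}(\beta,\phi))$. Given a mixing weight $\alpha_t(\alpha,\beta,\phi,\varphi)$ depending on an additional parameter $\alpha$, the two-regime mixture autoregressive log-likelihood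 is $L_T(\alpha,\beta,\phi,\varphi)=\sum_{t=1}^T\log[\alpha_tf_t(\beta,\phi)+(1-\alpha_t)f_t(\beta,\varphi)]$; the null (linear AR) log-likelihood is $L^0_T(\tilde\phi)=\sum_{t=1}^T\log f_t(\tilde\phi)$. Let $\hat{\tilde\phi}_T$ satisfy $L^0_T(\hat{\tilde\phi}_T)=\sup_{\tilde\phi\in\tilde\Phi}L^0_T(\tilde\phi)+o_p(1)$ and $\hat{\tilde\phi}_T=\tilde\phi^*+o_p(1)$. Define $LR_T(\alpha)=2[\sup_{(\beta,\phi,\varphi)\in B\times\Phi\times\Phi}L_T(\alpha,\beta,\phi,\varphi)-\sup_{\tilde\phi\in\tilde\Phi}L^0_T(\tilde\phi)]$ and $LR_T=\sup_{\alpha\in A}LR_T(\alpha)$. Notation. For random quantities $X_{T\alpha}$ indexed by $\alpha\in A$, $X_{T\alpha}=o_{p\alpha}(1)$ (resp. $O_{p\alpha}(1)$) means $\sup_{\alpha\in A}\|X_{T\alpha}\|=o_p(1)$ (resp. $O_p(1)$). $\mathcal B(A,\mathbb R^k)$ (resp. $\mathcal C(A,\mathbb R^k)$) is the space of bounded (resp. continuous) $\mathbb R^k$-valued functions on $A$ with the uniform metric; $\Rightarrow$ denotes weak convergence of processes in such spaces. A set $\Lambda\subset\mathbb R^r$ is a cone if $\lambda\in\Lambda$ implies $a\lambda\in\Lambda$ for all real $a>0$. A collection $\{\Gamma_\alpha,\alpha\in A\}$ of subsets of $\mathbb R^r$ is locally uniformly equal to $\Lambda\subset\mathbb R^r$ if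 there is $\delta>0$ with $\Gamma_\alpha\cap(-\delta,\delta)^r=\Lambda\cap(-\delta,\delta)^r$ for all $\alpha\in A$. $\lambda_{\min},\lambda_{\max}$ denote smallest/largest eigenvalues. Assumption 1. (i) $y_t=\tilde\phi^*_0+\sum_{i=1}^p\tilde\phi^*_iy_{t-i}+\tilde\sigma^*\varepsilon_t$ is a stationary linear Gaussian AR($p$) process, $\varepsilon_t$ i.i.d. $N(0,1)$ with $\varepsilon_t$ independent of $\{y_{t-j},j>0\}$, where $\tilde\phi^*$ is an interior point of a compact set $\tilde\Phi\subset\{\tilde\phi:\tilde\phi_0\in\mathbb R,\ 1-\sum_{i=1}^p\tilde\phi_iz^i\ne0\text{ for }|z|\le1,\ \tilde\sigma^2\in(0,\infty)\}$. (ii) The parameter space of $(\alpha,\beta,\phi,\varphi)$ is $A\times B\times\Phi\times\Phi$ with $A\subset\mathbb R^a$ compact and $B\subset\mathbb R^{q_1}$, $\Phi\subset\mathbb R^{q_2}$ compact such that $(\beta,\phi)\in B\times\Phi$ iff $P^{-1}(\beta,\phi)\in\tilde\Phi$; write $(\beta^*,\phi^* )=P\tilde\phi^*$. (iii) For all $t$ and all parameter values, $\alpha_t(\alpha,\beta,\phi,\varphi)$ is $\sigma(\boldsymbol y_{t-1})$-measurable and lies in $(0,1)$. Assumption 2. For each $\alpha\in A$, estimators $(\hat\beta_{T\alpha},\hat\phi_{T\alpha},\hat\varphi_{T\alpha})\in B\times\Phi\times\Phi$ satisfy (i) $L_T(\alpha,\hat\beta_{T\alpha},\hat\phi_{T\alpha},\hat\varphi_{T\alpha})=\sup_{(\beta,\phi,\varphi)\in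 B\times\Phi\times\Phi}L_T(\alpha,\beta,\phi,\varphi)+o_{p\alpha}(1)$ and (ii) $(\hat\beta_{T\alpha},\hat\phi_{T\alpha},\hat\varphi_{T\alpha})=(\beta^*,\phi^*,\phi^* )+o_{p\alpha}(1)$. Assumption 3. (i) For every $\alpha\in A$ the map $(\pi,\varpi)=\boldsymbol\pi_\alpha(\phi,\varphi)$ from $\Phi\times\Phi$ onto $\Pi_\alpha:=\boldsymbol\pi_\alpha(\Phi\times\Phi)\subset\mathbb R^{2q_2}$ is one-to-one with $\boldsymbol\pi_\alpha$ and $\boldsymbol\pi_\alpha^{-1}$ continuous. (ii) $\boldsymbol\pi_\alpha(\{(\phi,\phi):\phi\in\Phi\})=\Phi\times\{0\}$ and $\boldsymbol\pi_\alpha(\phi^*,\phi^* )=(\pi^*,0)$ with $\pi^*:=\phi^*$. (iii) $(\hat\beta_{T\alpha},\hat\pi_{T\alpha},\hat\varpi_{T\alpha})=(\beta^*,\pi^*,0)+o_{p\alpha}(1)$, where $(\hat\pi_{T\alpha},\hat\varpi_{T\alpha})=\boldsymbol\pi_\alpha(\hat\phi_{T\alpha},\hat\varphi_{T\alpha})$. The reparameterized log-likelihood is $L^\pi_T(\alpha,\beta,\pi,\varpi)=L_T(\alpha,\beta,\boldsymbol\pi_\alpha^{-1}(\pi,\varpi))$. Assumption 4. For some integer $k\ge2$ and every $\alpha\in A$, $\alpha_t(\alpha,\cdot)$ and $\boldsymbol\pi^{-1}_\alpha$ are $k$ times continuously differentiable on the interiors of $B\times\Phi\times\Phi$ and $\Pi_\alpha$,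 respectively. Assumption 5. For each $\alpha\in A$ and $(\beta,\pi,\varpi)\in B\times\Pi_\alpha$, with $\boldsymbol\theta=\boldsymbol\theta(\alpha,\beta,\pi,\varpi)$, $L^\pi_T(\alpha,\beta,\pi,\varpi)-L^\pi_T(\alpha,\beta^*,\pi^*,0)=(T^{-1/2}S_{T\alpha})'[T^{1/2}\boldsymbol\theta]-\tfrac12[T^{1/2}\boldsymbol\theta]'\mathcal I_\alpha[T^{1/2}\boldsymbol\theta]+R_T(\alpha,\beta,\pi,\varpi)$, where: (i) for each $\alpha$, $\boldsymbol\theta(\alpha,\cdot)$ maps $B\times\Pi_\alpha$ onto $\Theta_\alpha\subset\mathbb R^r$, with (a) $\boldsymbol\theta(\alpha,\beta^*,\pi^*,0)=0$ and (b) for every $\epsilon>0$ there is $\delta_\epsilon>0$ with $\inf_{\alpha\in A}\inf_{(\beta,\pi,\varpi)\in B\times\Pi_\alpha:\|(\beta,\pi,\varpi)-(\beta^*,\pi^*,0)\|\ge\epsilon}\|\boldsymbol\theta(\alpha,\beta,\pi,\varpi)\|\ge\delta_\epsilon$; (ii) $S_{T\alpha}=\sum_{t=1}^Ts_{t\alpha}$ is an $\mathbb R^r$-valued $\mathcal F_T$-measurable process indexed by $\alpha\in A$, not depending on $(\beta,\pi,\varpi)$, with sample paths continuous in $\alpha$, and $T^{-1/2}S_{T\bullet}\Rightarrow S_\bullet$ for a mean-zero $\mathbb R^r$-valued Gaussian process $\{S_\alpha:\alpha\in A\}$ with a.s. continuous sample paths and $E[S_\alpha S_\alpha']=E[s_{t\alpha}s_{t\alpha}']=\mathcal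 I_\alpha$; (iii) $\mathcal I_\alpha$ is a nonrandom symmetric $r\times r$ matrix not depending on $(\beta,\pi,\varpi)$, continuous in $\alpha$, with $0<\inf_{\alpha\in A}\lambda_{\min}(\mathcal I_\alpha)$ and $\sup_{\alpha\in A}\lambda_{\max}(\mathcal I_\alpha)<\infty$; (iv) for every nonrandom sequence of positive scalars $\gamma_T\to0$, $\sup_{(\beta,\pi,\varpi)\in B\times\Pi_\alpha:\|(\beta,\pi,\varpi)-(\beta^*,\pi^*,0)\|\le\gamma_T}|R_T(\alpha,\beta,\pi,\varpi)|/(1+\|T^{1/2}\boldsymbol\theta(\alpha,\beta,\pi,\varpi)\|)^2=o_{p\alpha}(1)$. Assumption 6. $\{\Theta_\alpha,\alpha\in A\}$ is locally uniformly equal to a cone $\Lambda\subset\mathbb R^r$. Assumption 7. With $q_\theta=q_1+q_2$ and $q_\vartheta=r-q_\theta$, $\Lambda=\mathbb R^{q_\theta}\times\Lambda_\vartheta$ for a cone $\Lambda_\vartheta\subset\mathbb R^{q_\vartheta}$. Assumption 8. Partitioning $S_{T\alpha}=(S_{T\theta\alpha},S_{T\vartheta\alpha})$ with $S_{T\theta\alpha}$ of dimension $q_\theta$, $S_{T\theta\alpha}=S^0_T:=\sum_{t=1}^T\nabla f_t(\tilde\phi^* )/f_t(\tilde\phi^* )$ for all $\alpha$. Let $\mathcal I^0=E[(\nabla f_t(\tilde\phi^* )/f_t(\tilde\phi^* ))(\nabla f_t(\tilde\phi^* )/f_t(\tilde\phi^* ))']$. Further notation. $Z_{T\alpha}=\mathcal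 I_\alpha^{-1}T^{-1/2}S_{T\alpha}$, $Z_\alpha=\mathcal I_\alpha^{-1}S_\alpha$. Partition $S_\alpha=(S_{\theta\alpha},S_{\vartheta\alpha})$, $Z_\alpha=(Z_{\theta\alpha},Z_{\vartheta\alpha})$, $\boldsymbol\lambda=(\boldsymbol\lambda_\theta,\boldsymbol\lambda_\vartheta)$ and $\mathcal I_\alpha$ into blocks $\mathcal I_{\theta\theta\alpha},\mathcal I_{\theta\vartheta\alpha},\mathcal I_{\vartheta\theta\alpha},\mathcal I_{\vartheta\vartheta\alpha}$ conformably with dimensions $q_\theta,q_\vartheta$; $(\mathcal I_\alpha^{-1})_{\vartheta\vartheta}$ is the bottom-right $q_\vartheta\times q_\vartheta$ block of $\mathcal I_\alpha^{-1}$. $\Theta_{\alpha,T}=\{T^{1/2}\boldsymbol\theta:\boldsymbol\theta\in\Theta_\alpha\}$. *)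

theory Defs
  imports "HOL-Probability.Probability"
begin

definition cone_pos :: "'v::real_vector set \<Rightarrow> bool" where
  "cone_pos L \<longleftrightarrow> (\<forall>x\<in>L. \<forall>a::real. a > 0 \<longrightarrow> a *\<^sub>R x \<in> L)"

definition loc_unif_equal :: "'a set \<Rightarrow> ('a \<Rightarrow> (real^'r) set) \<Rightarrow> (real^'r) set \<Rightarrow> bool" where
  "loc_unif_equal A Th L \<longleftrightarrow>
     (\<exists>\<delta>>0. \<forall>\<alpha>\<in>A. Th \<alpha> \<inter> {x. \<forall>i. \<bar>x $ i\<bar> < \<delta>} = L \<inter> {x. \<forall>i. \<bar>x $ i\<bar> < \<delta>})"

definition lambda_min :: "real^'r^'r \<Rightarrow> real" where
  "lambda_min Mx = Inf {c. \<exists>v. v \<noteq> 0 \<and> Mx *v v = c *\<^sub>R v}"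

definition lambda_max :: "real^'r^'r \<Rightarrow> real" where
  "lambda_max Mx = Sup {c. \<exists>v. v \<noteq> 0 \<and> Mx *v v = c *\<^sub>R v}"

definition outer_exp :: "'m measure \<Rightarrow> ('m \<Rightarrow> real) \<Rightarrow> real" where
  "outer_exp M f = Inf {integral\<^sup>L M h | h. integrable M h \<and> (AE \<omega> in M. f \<omega> \<le> h \<omega>)}"

definition path_dist :: "'a set \<Rightarrow> ('a \<Rightarrow> 'b::real_normed_vector) \<Rightarrow> ('a \<Rightarrow> 'b) \<Rightarrow> real" where
  "path_dist A f g = (SUP \<alpha>\<in>A. norm (f \<alpha> - g \<alpha>))"

text \<open>Weak convergence (Hoffmann-Jorgensen sense) of processes with continuous sample paths on A,
  in the uniform metric: outer expectations of bounded continuous functionals converge.\<close>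
definition weak_conv_proc ::
  "'m measure \<Rightarrow> 'n measure \<Rightarrow> 'a::topological_space set \<Rightarrow> (nat \<Rightarrow> 'a \<Rightarrow> 'm \<Rightarrow> 'b::real_normed_vector)
     \<Rightarrow> ('a \<Rightarrow> 'n \<Rightarrow> 'b) \<Rightarrow> bool" where
  "weak_conv_proc M N A X Y \<longleftrightarrow>
     (\<forall>g :: ('a \<Rightarrow> 'b) \<Rightarrow> real.
        ((\<exists>B. \<forall>f. continuous_on A f \<longrightarrow> \<bar>g f\<bar> \<le> B) \<and>
         (\<forall>f. continuous_on A f \<longrightarrow> (\<forall>\<epsilon>>0. \<exists>\<delta>>0. \<forall>h. continuous_on A h \<longrightarrow>
               path_dist A f h < \<delta> \<longrightarrow> \<bar>g f - g h\<bar> < \<epsilon>)))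
        \<longrightarrow> (\<lambda>T. outer_exp M (\<lambda>\<omega>. g (\<lambda>\<alpha>. X T \<alpha> \<omega>))) \<longlonglongrightarrow> outer_exp N (\<lambda>\<omega>. g (\<lambda>\<alpha>. Y \<alpha> \<omega>)))"

definition gaussian_rv :: "'n measure \<Rightarrow> ('n \<Rightarrow> real) \<Rightarrow> bool" where
  "gaussian_rv N X \<longleftrightarrow>
     (X \<in> borel_measurable N \<and> (\<exists>\<mu>. AE \<omega> in N. X \<omega> = \<mu>)) \<or>
     (\<exists>\<mu> \<sigma>. \<sigma> > 0 \<and> distributed N lborel X (normal_density \<mu> \<sigma>))"

definition gaussian_proc :: "'n measure \<Rightarrow> 'a set \<Rightarrow> ('a \<Rightarrow> 'n \<Rightarrow> real^'r) \<Rightarrow> bool" where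
  "gaussian_proc N A S \<longleftrightarrow>
     (\<forall>F (c :: 'a \<Rightarrow> real^'r). finite F \<longrightarrow> F \<subseteq> A \<longrightarrow> gaussian_rv N (\<lambda>\<omega>. \<Sum>\<alpha>\<in>F. c \<alpha> \<bullet> S \<alpha> \<omega>))"

text \<open>Uniform o_p(1): for every eps, the outer probability of the event that the supremum
  over the index set exceeds eps tends to 0.\<close>
definition uo_p :: "'m measure \<Rightarrow> (nat \<Rightarrow> 'i set) \<Rightarrow> (nat \<Rightarrow> 'i \<Rightarrow> 'm \<Rightarrow> real) \<Rightarrow> bool" where
  "uo_p M I X \<longleftrightarrow>
     (\<forall>\<epsilon>>0. \<exists>E. (\<forall>T. E T \<in> sets M \<and> {\<omega>\<in>space M. \<exists>i\<in>I T. \<epsilon> < \<bar>X T i \<omega>\<bar>} \<subseteq> E T)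
               \<and> (\<lambda>T. measure M (E T)) \<longlonglongrightarrow> 0)"

end

theory Submission
  imports Defs
begin

lemma sym_dot:
  fixes Im :: "real^'r^'r"
  assumes "transpose Im = Im"
  shows "v \<bullet> (Im *v w) = (Im *v v) \<bullet> w"
proof -
  have "v \<bullet> (Im *v w) = (v v* Im) \<bullet> w" by (simp add: dot_lmul_matrix)
  also have "v v* Im = Im *v v" by (metis assms vector_transpose_matrix)
  finally show ?thesis .
qed

lemma eig_lower:
  fixes Im :: "real^'r^'r"
  assumes sym: "transpose Im = Im"
  shows "lambda_min Im * (norm x)^2 \<le> x \<bullet> (Im *v x)"
proof -
  define q where "q = (\<lambda>x::real^'r. x \<bullet> (Im *v x))"
  have cq: "continuous_on (sphere 0 1) q" unfolding q_def
    by (intro continuous_intros linear_continuous_on matrix_vector_mul_bounded_linear)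
  have ne: "sphere (0::real^'r) 1 \<noteq> {}" by simp
  obtain v where v: "v \<in> sphere 0 1" and vmin: "\<And>y. y \<in> sphere 0 1 \<Longrightarrow> q v \<le> q y"
    using continuous_attains_inf[OF compact_sphere ne cq] by blast
  define m where "m = q v"
  have qs: "q (a *\<^sub>R y) = a^2 * q y" for a y
    by (simp add: q_def matrix_vector_mult_scaleR power2_eq_square)
  have mle: "m * (norm y)^2 \<le> q y" for y
  proof (cases "y = 0")
    case True then show ?thesis by (simp add: q_def)
  next
    case False
    hence "(1/norm y) *\<^sub>R y \<in> sphere 0 1" by simp
    hence "m \<le> q ((1/norm y) *\<^sub>R y)" using vmin m_def by blast
    also have "\<dots> = q y / (norm y)^2" by (simp add: qs power_divide)
    finally show ?thesis using False by (simp add: field_simps)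
  qed
  define w where "w = Im *v v - m *\<^sub>R v"
  have nv: "norm v = 1" using v by simp
  have vv: "v \<bullet> v = 1" using nv by (simp add: norm_eq_sqrt_inner)
  define b where "b = q w - m * (norm w)^2"
  have b0: "0 \<le> b" using mle[of w] b_def by simp
  have exp: "q (v + t *\<^sub>R w) - m * (norm (v + t *\<^sub>R w))^2 = 2*t*(norm w)^2 + t^2 * b" for t
  proof -
    have s: "v \<bullet> (Im *v w) = (Im *v v) \<bullet> w" by (rule sym_dot[OF sym])
    have "q (v + t *\<^sub>R w) = q v + t * (v \<bullet> (Im *v w)) + t * (w \<bullet> (Im *v v)) + t^2 * q w"
      by (simp add: q_def matrix_vector_right_distrib matrix_vector_mult_scaleR inner_add_left inner_add_right power2_eq_square algebra_simps)
    moreover have "(norm (v + t *\<^sub>R w))^2 = 1 + 2*t*(v \<bullet> w) + t^2 * (norm w)^2"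
      unfolding power2_norm_eq_inner by (simp add: inner_add_left inner_add_right vv inner_commute algebra_simps power2_eq_square)
    moreover have "w \<bullet> (Im *v v) = (norm w)^2 + m * (v \<bullet> w)"
      by (simp add: power2_norm_eq_inner w_def inner_diff_left inner_commute)
    ultimately show ?thesis using s unfolding b_def m_def[symmetric]
      by (simp add: inner_commute algebra_simps power2_eq_square)
  qed
  have w0: "w = 0"
  proof (rule ccontr)
    assume "w \<noteq> 0"
    hence a: "(norm w)^2 > 0" by simp
    define t where "t = -((norm w)^2) / (b + 1)"
    have "0 \<le> q (v + t *\<^sub>R w) - m * (norm (v + t *\<^sub>R w))^2" using mle by simp
    also have "\<dots> = 2*t*(norm w)^2 + t^2 * b" by (rule exp)
    also have "\<dots> < 0"
    proof -
      have "t < 0" using a b0 by (simp add: t_def)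
      have tb: "t * b > -((norm w)^2)" using a b0 by (simp add: t_def field_simps)
      have "t * (t*b) < t * (-((norm w)^2))" using mult_strict_left_mono_neg[OF tb \<open>t<0\<close>] by simp
      moreover have "t * (norm w)^2 < 0" using \<open>t<0\<close> a by (simp add: mult_neg_pos)
      ultimately show ?thesis by (simp add: power2_eq_square algebra_simps)
    qed
    finally show False by simp
  qed
  hence eig: "Im *v v = m *\<^sub>R v" by (simp add: w_def)
  have v0: "v \<noteq> 0" using nv by auto
  have inS: "m \<in> {c. \<exists>v. v \<noteq> 0 \<and> Im *v v = c *\<^sub>R v}" using eig v0 by blast
  have bdd: "bdd_below {c. \<exists>v. v \<noteq> 0 \<and> Im *v v = c *\<^sub>R v}"
  proof (rule bdd_belowI[of _ m], clarify)
    fix c u assume u: "(u::real^'r) \<noteq> 0" "Im *v u = c *\<^sub>R u"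
    have "q u = c * (norm u)^2" using u by (simp add: q_def power2_norm_eq_inner)
    hence "m * (norm u)^2 \<le> c * (norm u)^2" using mle[of u] by simp
    thus "m \<le> c" using u by simp
  qed
  have "lambda_min Im \<le> m" unfolding lambda_min_def by (rule cInf_lower[OF inS bdd])
  hence "lambda_min Im * (norm x)^2 \<le> m * (norm x)^2" by (simp add: mult_right_mono)
  also have "\<dots> \<le> q x" by (rule mle)
  finally show ?thesis by (simp add: q_def)
qed

lemma inf_restrict:
  fixes Q :: "'x \<Rightarrow> real"
  assumes z: "z \<in> S \<inter> B" and nn: "\<forall>l\<in>S. 0 \<le> Q l" and far: "\<forall>l\<in>S - B. Q z \<le> Q l"
  shows "Inf (Q ` S) = Inf (Q ` (S \<inter> B))"
proof (rule antisym)
  have bdd: "bdd_below (Q ` S)" using nn by (intro bdd_belowI[of _ 0]) auto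
  show "Inf (Q ` S) \<le> Inf (Q ` (S \<inter> B))"
    by (rule cInf_superset_mono) (use z bdd in auto)
  have bdd2: "bdd_below (Q ` (S \<inter> B))" using nn by (intro bdd_belowI[of _ 0]) auto
  show "Inf (Q ` (S \<inter> B)) \<le> Inf (Q ` S)"
  proof (rule cInf_greatest)
    show "Q ` S \<noteq> {}" using z by auto
  next
    fix y assume "y \<in> Q ` S"
    then obtain l where l: "l \<in> S" "y = Q l" by auto
    show "Inf (Q ` (S \<inter> B)) \<le> y"
    proof (cases "l \<in> B")
      case True thus ?thesis using l bdd2 by (intro cInf_lower) auto
    next
      case False
      have "Inf (Q ` (S \<inter> B)) \<le> Q z" using z bdd2 by (intro cInf_lower) auto
      also have "\<dots> \<le> Q l" using far l False by auto
      finally show ?thesis using l by simp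
    qed
  qed
qed

lemma core:
  fixes Im :: "real^'r^'r" and X Z :: "real^'r" and Th L :: "(real^'r) set"
  assumes c: "c > 0" and pd: "\<forall>x. c*(norm x)^2 \<le> x \<bullet> (Im *v x)"
   and cone: "cone_pos L" and th0: "0 \<in> Th" and d: "\<delta> > 0"
   and eq: "Th \<inter> {x. \<forall>i. \<bar>x$i\<bar> < \<delta>} = L \<inter> {x. \<forall>i. \<bar>x$i\<bar> < \<delta>}"
   and t: "t > 0" and X: "norm X \<le> c*\<delta>*t/2"
   and Z: "Z = matrix_inv Im *v X"
  shows "Inf {(l - Z) \<bullet> (Im *v (l - Z)) | l. l \<in> (\<lambda>x. t *\<^sub>R x) ` Th}
       = Inf {(l - Z) \<bullet> (Im *v (l - Z)) | l. l \<in> L}"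
proof -
  have inj: "inj ((*v) Im)"
  proof (rule injI)
    fix x y assume "Im *v x = Im *v y"
    hence "Im *v (x - y) = 0" by (simp add: matrix_vector_mult_diff_distrib)
    hence "c * (norm (x-y))^2 \<le> 0" using pd[rule_format, of "x-y"] by simp
    thus "x = y" using c by (simp add: mult_le_0_iff)
  qed
  then obtain B where "B ** Im = mat 1" using matrix_left_invertible_injective by blast
  hence "Im ** B = mat 1" using matrix_left_right_inverse by blast
  hence "\<exists>A'. Im ** A' = mat 1 \<and> A' ** Im = mat 1" using \<open>B ** Im = mat 1\<close> by blast
  hence "Im ** matrix_inv Im = mat 1" unfolding matrix_inv_def by (rule someI_ex[THEN conjunct1])
  hence IZ: "Im *v Z = X" unfolding Z by (simp add: matrix_vector_mul_assoc)
  define Q where "Q = (\<lambda>l. (l - Z) \<bullet> (Im *v (l - Z)))"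
  have Qge: "c * (norm (l - Z))^2 \<le> Q l" for l unfolding Q_def using pd by blast
  have ZX: "Z \<bullet> X \<le> norm Z * norm X" by (rule norm_cauchy_schwarz)
  have nZ: "norm Z \<le> norm X / c"
  proof (cases "Z = 0")
    case True thus ?thesis using c by simp
  next
    case False
    have "c * (norm Z)^2 \<le> Z \<bullet> X" using pd[rule_format, of Z] IZ by simp
    hence "c * norm Z * norm Z \<le> norm X * norm Z" using ZX by (simp add: power2_eq_square algebra_simps)
    hence "c * norm Z \<le> norm X" using False by simp
    thus ?thesis using c by (simp add: field_simps)
  qed
  have Q0: "Q 0 \<le> (norm X)^2 / c"
  proof -
    have m: "Im *v (0 - Z) = - X" using IZ matrix_vector_mult_diff_distrib[of Im 0 Z] by simp
    have "Q 0 = Z \<bullet> X" unfolding Q_def using m by simp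
    also have "\<dots> \<le> norm X / c * norm X" using ZX nZ by (meson mult_right_mono norm_ge_zero order_trans)
    finally show ?thesis by (simp add: power2_eq_square)
  qed
  have far: "Q 0 \<le> Q l" if l: "\<delta> * t \<le> norm l" for l
  proof -
    have "norm l - norm Z \<le> norm (l - Z)" by (rule norm_triangle_ineq2)
    moreover have "norm X / c \<le> \<delta> * t / 2" using X c by (simp add: field_simps)
    ultimately have a: "norm X / c \<le> norm (l - Z)" using l nZ by linarith
    have "(norm X)^2 / c = c * (norm X / c)^2" using c by (simp add: power2_eq_square field_simps)
    also have "\<dots> \<le> c * (norm (l - Z))^2" using a c
      by (intro mult_left_mono power_mono) auto
    also have "\<dots> \<le> Q l" by (rule Qge)
    finally show ?thesis using Q0 by linarith
  qed
  have nn: "0 \<le> Q l" for l using Qge[of l] c by (meson order_trans mult_nonneg_nonneg less_imp_le zero_le_power2)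
  define Bx where "Bx = {x::real^'r. \<forall>i. \<bar>x$i\<bar> < \<delta> * t}"
  have dt: "\<delta> * t > 0" using d t by simp
  have farB: "Q 0 \<le> Q l" if nb: "l \<notin> Bx" for l
  proof -
    obtain i where "\<delta> * t \<le> \<bar>l$i\<bar>" using nb unfolding Bx_def by (auto simp: not_less)
    hence "\<delta> * t \<le> norm l" using component_le_norm_cart[of l i] by linarith
    thus ?thesis by (rule far)
  qed
  define S1 where "S1 = (\<lambda>x. t *\<^sub>R x) ` Th"
  have box_eq: "S1 \<inter> Bx = L \<inter> Bx"
  proof (intro equalityI subsetI)
    fix l assume "l \<in> S1 \<inter> Bx"
    then obtain x where x: "x \<in> Th" "l = t *\<^sub>R x" and lb: "l \<in> Bx" unfolding S1_def by auto
    have "\<forall>i. \<bar>x$i\<bar> < \<delta>"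
    proof
      fix i have "\<bar>t * x$i\<bar> < \<delta> * t" using lb x unfolding Bx_def by auto
      thus "\<bar>x$i\<bar> < \<delta>" using t by (simp add: abs_mult)
    qed
    hence "x \<in> L" using eq x by blast
    hence "l \<in> L" using cone t x unfolding cone_pos_def by blast
    thus "l \<in> L \<inter> Bx" using lb by blast
  next
    fix l assume lL: "l \<in> L \<inter> Bx"
    define x where "x = (1/t) *\<^sub>R l"
    have "x \<in> L" using cone t lL unfolding cone_pos_def x_def by auto
    moreover have "\<forall>i. \<bar>x$i\<bar> < \<delta>"
    proof
      fix i have "\<bar>l$i\<bar> < \<delta> * t" using lL unfolding Bx_def by auto
      thus "\<bar>x$i\<bar> < \<delta>" using t by (simp add: x_def abs_mult field_simps)
    qed
    ultimately have "x \<in> Th" using eq by blast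
    moreover have "l = t *\<^sub>R x" using t by (simp add: x_def)
    ultimately show "l \<in> S1 \<inter> Bx" using lL unfolding S1_def by blast
  qed
  have z1: "0 \<in> S1 \<inter> Bx" using th0 dt unfolding S1_def Bx_def by force
  have zL: "0 \<in> L \<inter> Bx" using z1 box_eq by simp
  have "Inf (Q ` S1) = Inf (Q ` (S1 \<inter> Bx))" using z1 nn farB by (intro inf_restrict) auto
  also have "\<dots> = Inf (Q ` (L \<inter> Bx))" using box_eq by simp
  also have "\<dots> = Inf (Q ` L)" using zL nn farB by (intro inf_restrict[symmetric]) auto
  finally have "Inf (Q ` S1) = Inf (Q ` L)" .
  moreover have "{(l - Z) \<bullet> (Im *v (l - Z)) | l. l \<in> (\<lambda>x. t *\<^sub>R x) ` Th} = Q ` S1"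
    unfolding Q_def S1_def by blast
  moreover have "{(l - Z) \<bullet> (Im *v (l - Z)) | l. l \<in> L} = Q ` L"
    unfolding Q_def by blast
  ultimately show ?thesis by simp
qed

lemma bdd_norm:
  fixes f :: "'a::metric_space \<Rightarrow> 'b::real_normed_vector"
  assumes "compact A" "continuous_on A f"
  shows "bdd_above ((\<lambda>\<alpha>. norm (f \<alpha>)) ` A)"
proof -
  have "bounded (f ` A)" using compact_continuous_image[OF assms(2,1)] compact_imp_bounded by blast
  then obtain a where "\<forall>x\<in>f ` A. norm x \<le> a" unfolding bounded_iff by blast
  thus ?thesis by (intro bdd_aboveI[of _ a]) auto
qed

lemma pd_ge:
  fixes f :: "'a::metric_space \<Rightarrow> 'b::real_normed_vector"
  assumes "compact A" "continuous_on A f" "\<alpha> \<in> A"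
  shows "norm (f \<alpha>) \<le> path_dist A f (\<lambda>_. 0)"
  unfolding path_dist_def using bdd_norm[OF assms(1,2)] assms(3) by (auto intro: cSUP_upper2)

lemma pd_le:
  fixes f :: "'a::metric_space \<Rightarrow> 'b::real_normed_vector"
  assumes "A \<noteq> {}" "\<forall>\<alpha>\<in>A. norm (f \<alpha>) \<le> K"
  shows "path_dist A f (\<lambda>_. 0) \<le> K"
  unfolding path_dist_def using assms by (auto intro: cSUP_least)

lemma pd_lip:
  fixes f h :: "'a::metric_space \<Rightarrow> 'b::real_normed_vector"
  assumes A: "compact A" "A \<noteq> {}" and f: "continuous_on A f" and h: "continuous_on A h"
  shows "\<bar>path_dist A f (\<lambda>_. 0) - path_dist A h (\<lambda>_. 0)\<bar> \<le> path_dist A f h"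
proof -
  have fh: "continuous_on A (\<lambda>\<alpha>. f \<alpha> - h \<alpha>)" using f h by (intro continuous_intros)
  have hf: "continuous_on A (\<lambda>\<alpha>. h \<alpha> - f \<alpha>)" using f h by (intro continuous_intros)
  have d1: "norm (f \<alpha> - h \<alpha>) \<le> path_dist A f h" if "\<alpha> \<in> A" for \<alpha>
    using pd_ge[OF A(1) fh that] by (simp add: path_dist_def)
  have "path_dist A f (\<lambda>_. 0) \<le> path_dist A h (\<lambda>_. 0) + path_dist A f h"
  proof (rule pd_le[OF A(2)], intro ballI)
    fix \<alpha> assume a: "\<alpha> \<in> A"
    have "norm (f \<alpha>) \<le> norm (h \<alpha>) + norm (f \<alpha> - h \<alpha>)" by (metis norm_triangle_sub add.commute)
    thus "norm (f \<alpha>) \<le> path_dist A h (\<lambda>_. 0) + path_dist A f h"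
      using pd_ge[OF A(1) h a] d1[OF a] by linarith
  qed
  moreover have "path_dist A h (\<lambda>_. 0) \<le> path_dist A f (\<lambda>_. 0) + path_dist A f h"
  proof (rule pd_le[OF A(2)], intro ballI)
    fix \<alpha> assume a: "\<alpha> \<in> A"
    have "norm (h \<alpha>) \<le> norm (f \<alpha>) + norm (f \<alpha> - h \<alpha>)" by (metis norm_triangle_sub norm_minus_commute add.commute)
    thus "norm (h \<alpha>) \<le> path_dist A f (\<lambda>_. 0) + path_dist A f h"
      using pd_ge[OF A(1) f a] d1[OF a] by linarith
  qed
  ultimately show ?thesis by linarith
qed

lemma dense_exceed:
  fixes f :: "'a::metric_space \<Rightarrow> 'b::real_normed_vector"
  assumes "A \<subseteq> closure D" "D \<subseteq> A" "continuous_on A f" "\<alpha> \<in> A" "r < norm (f \<alpha>)"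
  shows "\<exists>\<beta>\<in>D. r < norm (f \<beta>)"
proof -
  define e where "e = norm (f \<alpha>) - r"
  have e: "e > 0" using assms(5) by (simp add: e_def)
  obtain d where d: "d > 0" "\<forall>x'\<in>A. dist x' \<alpha> < d \<longrightarrow> dist (f x') (f \<alpha>) < e"
    using assms(3,4) e unfolding continuous_on_iff by blast
  have "\<alpha> \<in> closure D" using assms(1,4) by blast
  then obtain \<beta> where \<beta>: "\<beta> \<in> D" "dist \<beta> \<alpha> < d" using d(1) unfolding closure_approachable by blast
  hence "dist (f \<beta>) (f \<alpha>) < e" using d(2) assms(2) by blast
  hence "r < norm (f \<beta>)" unfolding e_def dist_norm using norm_triangle_ineq2[of "f \<alpha>" "f \<beta>"]
    by (simp add: norm_minus_commute)
  thus ?thesis using \<beta> by blast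
qed

lemma outer_ge:
  assumes P: "prob_space M" and E: "E \<in> sets M"
    and G01: "\<forall>\<omega>\<in>space M. 0 \<le> G \<omega> \<and> G \<omega> \<le> 1" and G1: "\<forall>\<omega>\<in>E. 1 \<le> G \<omega>"
  shows "measure M E \<le> outer_exp M G"
  unfolding outer_exp_def
proof (rule cInf_greatest)
  interpret prob_space M by (rule P)
  have "integrable M (\<lambda>_. 1::real)" by simp
  moreover have "AE \<omega> in M. G \<omega> \<le> 1" using G01 by auto
  ultimately show "{integral\<^sup>L M h | h. integrable M h \<and> (AE \<omega> in M. G \<omega> \<le> h \<omega>)} \<noteq> {}" by blast
next
  interpret prob_space M by (rule P)
  fix y assume "y \<in> {integral\<^sup>L M h | h. integrable M h \<and> (AE \<omega> in M. G \<omega> \<le> h \<omega>)}"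
  then obtain h where h: "y = integral\<^sup>L M h" "integrable M h" "AE \<omega> in M. G \<omega> \<le> h \<omega>" by blast
  have "measure M E = integral\<^sup>L M (indicator E :: 'a \<Rightarrow> real)" using E sets.sets_into_space[OF E]
    by (simp add: Int_absorb2)
  also have "\<dots> \<le> integral\<^sup>L M h"
  proof (rule integral_mono_AE)
    show "integrable M (indicator E :: 'a \<Rightarrow> real)" using E by (intro integrable_real_indicator) (simp_all add: less_top[symmetric])
    show "integrable M h" by (rule h(2))
    show "AE x in M. (indicator E x :: real) \<le> h x"
      using h(3) AE_space proof (eventually_elim)
      case (elim x)
      show ?case using G01 G1 elim sets.sets_into_space[OF E]
        by (cases "x \<in> E") (force simp: indicator_def)+
    qed
  qed
  finally show "measure M E \<le> y" using h(1) by simp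
qed

lemma outer_le:
  assumes P: "prob_space N" and F: "F \<in> sets N"
    and G0: "\<forall>\<omega>\<in>space N. 0 \<le> G \<omega>" and GF: "AE \<omega> in N. G \<omega> \<le> indicator F \<omega>"
  shows "outer_exp N G \<le> measure N F"
  unfolding outer_exp_def
proof (rule cInf_lower)
  interpret prob_space N by (rule P)
  have "measure N F = integral\<^sup>L N (indicator F :: 'a \<Rightarrow> real)" using F sets.sets_into_space[OF F]
    by (simp add: Int_absorb2)
  moreover have "integrable N (indicator F :: 'a \<Rightarrow> real)" using F by (intro integrable_real_indicator) (simp_all add: less_top[symmetric])
  ultimately show "measure N F \<in> {integral\<^sup>L N h | h. integrable N h \<and> (AE \<omega> in N. G \<omega> \<le> h \<omega>)}"
    using GF by blast
  show "bdd_below {integral\<^sup>L N h | h. integrable N h \<and> (AE \<omega> in N. G \<omega> \<le> h \<omega>)}"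
  proof (rule bdd_belowI[of _ 0], clarify)
    fix h assume h: "integrable N h" "AE \<omega> in N. G \<omega> \<le> h \<omega>"
    have "AE \<omega> in N. 0 \<le> h \<omega>" using h(2) AE_space by eventually_elim (use G0 in \<open>auto intro: order_trans\<close>)
    then show "0 \<le> integral\<^sup>L N h" by (rule integral_nonneg_AE)
  qed
qed

lemma sets_exceed:
  fixes F :: "'a \<Rightarrow> 'm \<Rightarrow> real^'r"
  assumes D: "countable D" and F: "\<forall>\<alpha>\<in>D. F \<alpha> \<in> borel_measurable M"
  shows "{\<omega>\<in>space M. \<exists>\<alpha>\<in>D. r < norm (F \<alpha> \<omega>)} \<in> sets M"
proof -
  have eq: "{\<omega>\<in>space M. \<exists>\<alpha>\<in>D. r < norm (F \<alpha> \<omega>)} = (\<Union>\<alpha>\<in>D. {\<omega>\<in>space M. r < norm (F \<alpha> \<omega>)})" by auto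
  have "{\<omega>\<in>space M. r < norm (F \<alpha> \<omega>)} \<in> sets M" if "\<alpha> \<in> D" for \<alpha>
  proof -
    have "F \<alpha> \<in> borel_measurable M" using F that by blast
    thus ?thesis by measurable
  qed
  thus ?thesis unfolding eq by (intro sets.countable_UN''[OF D])
qed

lemma clamp_lip: "\<bar>min 1 (max 0 (a - K)) - min 1 (max 0 (b - K))\<bar> \<le> \<bar>a - b\<bar>" for a b K :: real
  by (simp add: min_def max_def abs_if) 

theorem lemma3:
  fixes M :: "'m measure" and N :: "'n measure"
    and A :: "'a::euclidean_space set"
    and Par :: "'a \<Rightarrow> 'p::euclidean_space set" and pstar :: "'p"
    and \<theta> :: "'a \<Rightarrow> 'p \<Rightarrow> real^'r"
    and L :: "nat \<Rightarrow> 'a \<Rightarrow> 'p \<Rightarrow> 'm \<Rightarrow> real"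
    and R :: "nat \<Rightarrow> 'a \<Rightarrow> 'p \<Rightarrow> 'm \<Rightarrow> real"
    and s :: "nat \<Rightarrow> 'a \<Rightarrow> 'm \<Rightarrow> real^'r"
    and S :: "nat \<Rightarrow> 'a \<Rightarrow> 'm \<Rightarrow> real^'r"
    and Slim :: "'a \<Rightarrow> 'n \<Rightarrow> real^'r"
    and I :: "'a \<Rightarrow> real^'r^'r"
    and \<Lambda> :: "(real^'r) set"
  assumes probM: "prob_space M" and probN: "prob_space N"
    and A_compact: "compact A"
    \<comment> \<open>Assumption 5(i)\<close>
    and pstar_in: "\<forall>\<alpha>\<in>A. pstar \<in> Par \<alpha>"
    and theta_pstar: "\<forall>\<alpha>\<in>A. \<theta> \<alpha> pstar = 0"
    and theta_ident: "\<forall>\<epsilon>>0. \<exists>\<delta>>0. \<forall>\<alpha>\<in>A. \<forall>p\<in>Par \<alpha>.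
                        \<epsilon> \<le> norm (p - pstar) \<longrightarrow> \<delta> \<le> norm (\<theta> \<alpha> p)"
    \<comment> \<open>Quadratic expansion of the (reparameterized) log-likelihood, defining the remainder R\<close>
    and expansion: "\<forall>T. \<forall>\<alpha>\<in>A. \<forall>p\<in>Par \<alpha>. \<forall>\<omega>\<in>space M.
        L T \<alpha> p \<omega> - L T \<alpha> pstar \<omega> =
          ((1 / sqrt (real T)) *\<^sub>R S T \<alpha> \<omega>) \<bullet> (sqrt (real T) *\<^sub>R \<theta> \<alpha> p)
          - 1/2 * ((sqrt (real T) *\<^sub>R \<theta> \<alpha> p) \<bullet> (I \<alpha> *v (sqrt (real T) *\<^sub>R \<theta> \<alpha> p)))
          + R T \<alpha> p \<omega>"
    \<comment> \<open>Assumption 5(ii)\<close>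
    and S_sum: "\<forall>T. \<forall>\<alpha>\<in>A. \<forall>\<omega>\<in>space M. S T \<alpha> \<omega> = (\<Sum>t=1..T. s t \<alpha> \<omega>)"
    and s_meas: "\<forall>t. \<forall>\<alpha>\<in>A. s t \<alpha> \<in> borel_measurable M"
    and s_cov: "\<forall>t\<ge>1. \<forall>\<alpha>\<in>A. \<forall>i j. integrable M (\<lambda>\<omega>. s t \<alpha> \<omega> $ i * s t \<alpha> \<omega> $ j)
                   \<and> integral\<^sup>L M (\<lambda>\<omega>. s t \<alpha> \<omega> $ i * s t \<alpha> \<omega> $ j) = I \<alpha> $ i $ j"
    and S_cont: "\<forall>T. \<forall>\<omega>\<in>space M. continuous_on A (\<lambda>\<alpha>. S T \<alpha> \<omega>)"
    and S_weak: "weak_conv_proc M N A (\<lambda>T \<alpha> \<omega>. (1 / sqrt (real T)) *\<^sub>R S T \<alpha> \<omega>) Slim"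
    and Slim_meas: "\<forall>\<alpha>\<in>A. Slim \<alpha> \<in> borel_measurable N"
    and Slim_gauss: "gaussian_proc N A Slim"
    and Slim_cont: "AE \<omega> in N. continuous_on A (\<lambda>\<alpha>. Slim \<alpha> \<omega>)"
    and Slim_mean: "\<forall>\<alpha>\<in>A. \<forall>i. integrable N (\<lambda>\<omega>. Slim \<alpha> \<omega> $ i)
                   \<and> integral\<^sup>L N (\<lambda>\<omega>. Slim \<alpha> \<omega> $ i) = 0"
    and Slim_cov: "\<forall>\<alpha>\<in>A. \<forall>i j. integrable N (\<lambda>\<omega>. Slim \<alpha> \<omega> $ i * Slim \<alpha> \<omega> $ j)
                   \<and> integral\<^sup>L N (\<lambda>\<omega>. Slim \<alpha> \<omega> $ i * Slim \<alpha> \<omega> $ j) = I \<alpha> $ i $ j"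
    \<comment> \<open>Assumption 5(iii)\<close>
    and I_sym: "\<forall>\<alpha>\<in>A. transpose (I \<alpha>) = I \<alpha>"
    and I_cont: "continuous_on A I"
    and I_min: "\<exists>c>0. \<forall>\<alpha>\<in>A. c \<le> lambda_min (I \<alpha>)"
    and I_max: "\<exists>C. \<forall>\<alpha>\<in>A. lambda_max (I \<alpha>) \<le> C"
    \<comment> \<open>Assumption 5(iv)\<close>
    and R_small: "\<forall>\<gamma> :: nat \<Rightarrow> real. (\<forall>T. 0 < \<gamma> T) \<longrightarrow> \<gamma> \<longlonglongrightarrow> 0 \<longrightarrow>
        uo_p M (\<lambda>T. {(\<alpha>, p). \<alpha> \<in> A \<and> p \<in> Par \<alpha> \<and> norm (p - pstar) \<le> \<gamma> T})
          (\<lambda>T (\<alpha>, p) \<omega>. R T \<alpha> p \<omega> / (1 + norm (sqrt (real T) *\<^sub>R \<theta> \<alpha> p))\<^sup>2)"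
    \<comment> \<open>Assumption 6\<close>
    and Lambda_cone: "cone_pos \<Lambda>"
    and loc_eq: "loc_unif_equal A (\<lambda>\<alpha>. \<theta> \<alpha> ` Par \<alpha>) \<Lambda>"
  shows "uo_p M (\<lambda>T. A)
    (\<lambda>T \<alpha> \<omega>. let Z = matrix_inv (I \<alpha>) *v ((1 / sqrt (real T)) *\<^sub>R S T \<alpha> \<omega>) in
       Inf {(l - Z) \<bullet> (I \<alpha> *v (l - Z)) | l. l \<in> (\<lambda>x. sqrt (real T) *\<^sub>R x) ` (\<theta> \<alpha> ` Par \<alpha>)}
       - Inf {(l - Z) \<bullet> (I \<alpha> *v (l - Z)) | l. l \<in> \<Lambda>})"
proof -
  interpret M: prob_space M by (rule probM)
  interpret N: prob_space N by (rule probN)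
  show ?thesis
  proof (cases "A = {}")
    case True
    show ?thesis unfolding uo_p_def
      by (intro allI impI exI[of _ "\<lambda>_. {}"]) (auto simp: True)
  next
    case Ane: False
    obtain c where c: "c > 0" "\<forall>\<alpha>\<in>A. c \<le> lambda_min (I \<alpha>)" using I_min by blast
    have pd: "\<forall>\<alpha>\<in>A. \<forall>x. c*(norm x)^2 \<le> x \<bullet> (I \<alpha> *v x)"
    proof (intro ballI allI)
      fix \<alpha> and x :: "real^'r" assume a: "\<alpha> \<in> A"
      have "c*(norm x)^2 \<le> lambda_min (I \<alpha>) * (norm x)^2" using c a by (simp add: mult_right_mono)
      also have "\<dots> \<le> x \<bullet> (I \<alpha> *v x)" using I_sym a by (intro eig_lower) auto
      finally show "c*(norm x)^2 \<le> x \<bullet> (I \<alpha> *v x)" .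
    qed
    obtain \<delta> where \<delta>: "\<delta> > 0" and eqb: "\<forall>\<alpha>\<in>A. \<theta> \<alpha> ` Par \<alpha> \<inter> {x. \<forall>i. \<bar>x $ i\<bar> < \<delta>} = \<Lambda> \<inter> {x. \<forall>i. \<bar>x $ i\<bar> < \<delta>}"
      using loc_eq unfolding loc_unif_equal_def by blast
    obtain D where D: "countable D" "D \<subseteq> A" "A \<subseteq> closure D" using separable by blast
    have Smeas: "S T \<alpha> \<in> borel_measurable M" if "\<alpha> \<in> A" for T \<alpha>
    proof -
      have "(\<lambda>\<omega>. \<Sum>t=1..T. s t \<alpha> \<omega>) \<in> borel_measurable M"
        using s_meas that by (intro borel_measurable_sum) auto
      thus ?thesis using S_sum that by (subst measurable_cong) auto
    qed
    define XT where "XT T \<alpha> \<omega> = (1 / sqrt (real T)) *\<^sub>R S T \<alpha> \<omega>" for T \<alpha> \<omega>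
    have XTmeas: "XT T \<alpha> \<in> borel_measurable M" if "\<alpha> \<in> A" for T \<alpha>
      unfolding XT_def using Smeas[OF that] by measurable
    have XTcont: "continuous_on A (\<lambda>\<alpha>. XT T \<alpha> \<omega>)" if "\<omega> \<in> space M" for T \<omega>
      unfolding XT_def using S_cont that by (intro continuous_intros) auto
    define Ev where "Ev T r = {\<omega>\<in>space M. \<exists>\<alpha>\<in>D. r < norm (XT T \<alpha> \<omega>)}" for T r
    have Evm: "Ev T r \<in> sets M" for T r
      unfolding Ev_def using D XTmeas by (intro sets_exceed) auto
    define E where "E T = (if T = 0 then space M else Ev T (c * \<delta> * sqrt (real T) / 2))" for T
    have Em: "E T \<in> sets M" for T using Evm by (simp add: E_def)
    define diff where "diff = (\<lambda>T \<alpha> \<omega>. let Z = matrix_inv (I \<alpha>) *v ((1 / sqrt (real T)) *\<^sub>R S T \<alpha> \<omega>) in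
       Inf {(l - Z) \<bullet> (I \<alpha> *v (l - Z)) | l. l \<in> (\<lambda>x. sqrt (real T) *\<^sub>R x) ` (\<theta> \<alpha> ` Par \<alpha>)}
       - Inf {(l - Z) \<bullet> (I \<alpha> *v (l - Z)) | l. l \<in> \<Lambda>})"
    have incl: "{\<omega>\<in>space M. \<exists>\<alpha>\<in>A. \<epsilon> < \<bar>diff T \<alpha> \<omega>\<bar>} \<subseteq> E T" if eps: "\<epsilon> > 0" for \<epsilon> T
    proof (cases "T = 0")
      case True thus ?thesis by (auto simp: E_def)
    next
      case T0: False
      show ?thesis
      proof (rule subsetI, rule ccontr)
        fix \<omega> assume w: "\<omega> \<in> {\<omega>\<in>space M. \<exists>\<alpha>\<in>A. \<epsilon> < \<bar>diff T \<alpha> \<omega>\<bar>}" and nE: "\<omega> \<notin> E T"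
        then obtain \<alpha> where \<omega>: "\<omega> \<in> space M" and a: "\<alpha> \<in> A" and big: "\<epsilon> < \<bar>diff T \<alpha> \<omega>\<bar>" by blast
        define r where "r = c * \<delta> * sqrt (real T) / 2"
        have nD: "\<forall>\<beta>\<in>D. norm (XT T \<beta> \<omega>) \<le> r" using nE \<omega> T0 unfolding E_def Ev_def r_def by auto
        have "norm (XT T \<alpha> \<omega>) \<le> r"
        proof (rule ccontr)
          assume "\<not> norm (XT T \<alpha> \<omega>) \<le> r"
          hence "r < norm (XT T \<alpha> \<omega>)" by simp
          then obtain \<beta> where "\<beta> \<in> D" "r < norm (XT T \<beta> \<omega>)"
            using dense_exceed[OF D(3) D(2) XTcont[OF \<omega>] a] by blast
          thus False using nD by force
        qed
        hence "diff T \<alpha> \<omega> = 0" unfolding diff_def Let_def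
          apply (subst core[where c = c and \<delta> = \<delta> and X = "XT T \<alpha> \<omega>"])
          using c(1) pd a Lambda_cone pstar_in theta_pstar \<delta> eqb T0
          by (auto simp: XT_def r_def intro: image_eqI[of 0 "\<theta> \<alpha>" pstar])
        thus False using big eps by simp
      qed
    qed
    define GN where "GN K = {\<omega>\<in>space N. \<exists>\<alpha>\<in>D. real K < norm (Slim \<alpha> \<omega>)}" for K :: nat
    have GNm: "GN K \<in> sets N" for K
      unfolding GN_def using D Slim_meas by (intro sets_exceed) auto
    have GNdec: "decseq GN"
      unfolding decseq_def GN_def by (auto, meson le_less_trans of_nat_le_iff)
    have GNint: "measure N (\<Inter>K. GN K) = 0"
    proof -
      have Im: "(\<Inter>K. GN K) \<in> sets N" using GNm by blast
      have "AE \<omega> in N. \<omega> \<notin> (\<Inter>K. GN K)"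
        using Slim_cont
      proof eventually_elim
        case (elim \<omega>)
        obtain a where a: "\<forall>\<alpha>\<in>A. norm (Slim \<alpha> \<omega>) \<le> a"
          using bdd_norm[OF A_compact elim] unfolding bdd_above_def by auto
        obtain K :: nat where "a < real K" using reals_Archimedean2 by blast
        hence "\<omega> \<notin> GN K" using a D(2) unfolding GN_def by force
        thus ?case by blast
      qed
      hence "emeasure N (\<Inter>K. GN K) = 0"
        using AE_iff_measurable[OF Im, of "\<lambda>\<omega>. \<omega> \<notin> (\<Inter>K. GN K)"] sets.sets_into_space[OF Im] by blast
      thus ?thesis by (simp add: measure_def)
    qed
    have GNlim: "(\<lambda>K. measure N (GN K)) \<longlonglongrightarrow> 0"
      using N.finite_Lim_measure_decseq[of GN] GNm GNdec GNint by auto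
    have lim: "(\<lambda>T. measure M (E T)) \<longlonglongrightarrow> 0"
      unfolding tendsto_iff
    proof (intro allI impI)
      fix \<eta> :: real assume \<eta>: "\<eta> > 0"
      have "eventually (\<lambda>K. measure N (GN K) < \<eta>/2) sequentially"
        using GNlim \<eta> by (intro order_tendstoD(2)) auto
      then obtain K where K: "measure N (GN K) < \<eta>/2" using eventually_sequentially by auto
      define g :: "('a \<Rightarrow> real^'r) \<Rightarrow> real" where
        "g f = min 1 (max 0 (path_dist A f (\<lambda>_. 0) - real K))" for f
      have g01: "0 \<le> g f \<and> g f \<le> 1" for f by (simp add: g_def)
      have gprem: "(\<exists>B. \<forall>f. continuous_on A f \<longrightarrow> \<bar>g f\<bar> \<le> B) \<and>
         (\<forall>f. continuous_on A f \<longrightarrow> (\<forall>\<epsilon>>0. \<exists>\<delta>>0. \<forall>h. continuous_on A h \<longrightarrow>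
               path_dist A f h < \<delta> \<longrightarrow> \<bar>g f - g h\<bar> < \<epsilon>))"
      proof (rule conjI)
        show "\<exists>B. \<forall>f. continuous_on A f \<longrightarrow> \<bar>g f\<bar> \<le> B" using g01 by (intro exI[of _ 1]) auto
      next
        show "\<forall>f. continuous_on A f \<longrightarrow> (\<forall>\<epsilon>>0. \<exists>\<delta>>0. \<forall>h. continuous_on A h \<longrightarrow>
               path_dist A f h < \<delta> \<longrightarrow> \<bar>g f - g h\<bar> < \<epsilon>)"
      proof (intro allI impI)
        fix f :: "'a \<Rightarrow> real^'r" and \<epsilon> :: real assume f: "continuous_on A f" and e: "\<epsilon> > 0"
        show "\<exists>\<delta>>0. \<forall>h. continuous_on A h \<longrightarrow> path_dist A f h < \<delta> \<longrightarrow> \<bar>g f - g h\<bar> < \<epsilon>"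
        proof (intro exI[of _ \<epsilon>] conjI allI impI)
          fix h assume h: "continuous_on A h" and d: "path_dist A f h < \<epsilon>"
          have "\<bar>g f - g h\<bar> \<le> \<bar>path_dist A f (\<lambda>_. 0) - path_dist A h (\<lambda>_. 0)\<bar>"
            unfolding g_def by (rule clamp_lip)
          also have "\<dots> \<le> path_dist A f h" by (rule pd_lip[OF A_compact Ane f h])
          finally show "\<bar>g f - g h\<bar> < \<epsilon>" using d by simp
        qed (use e in auto)
      qed
      qed
      have gconv: "(\<lambda>T. outer_exp M (\<lambda>\<omega>. g (\<lambda>\<alpha>. XT T \<alpha> \<omega>))) \<longlonglongrightarrow> outer_exp N (\<lambda>\<omega>. g (\<lambda>\<alpha>. Slim \<alpha> \<omega>))"
        using S_weak gprem unfolding weak_conv_proc_def XT_def by blast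
      have oN: "outer_exp N (\<lambda>\<omega>. g (\<lambda>\<alpha>. Slim \<alpha> \<omega>)) \<le> measure N (GN K)"
      proof (rule outer_le[OF probN GNm])
        show "\<forall>\<omega>\<in>space N. 0 \<le> g (\<lambda>\<alpha>. Slim \<alpha> \<omega>)" using g01 by blast
        show "AE \<omega> in N. g (\<lambda>\<alpha>. Slim \<alpha> \<omega>) \<le> indicator (GN K) \<omega>"
          using Slim_cont AE_space
        proof eventually_elim
          case (elim \<omega>)
          show ?case
          proof (cases "\<omega> \<in> GN K")
            case True thus ?thesis using g01 by simp
          next
            case False
            hence nD: "\<forall>\<beta>\<in>D. norm (Slim \<beta> \<omega>) \<le> real K" using elim unfolding GN_def by auto
            have "\<forall>\<alpha>\<in>A. norm (Slim \<alpha> \<omega>) \<le> real K"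
            proof (intro ballI, rule ccontr)
              fix \<alpha> assume a: "\<alpha> \<in> A" and "\<not> norm (Slim \<alpha> \<omega>) \<le> real K"
              hence "real K < norm (Slim \<alpha> \<omega>)" by simp
              then obtain \<beta> where "\<beta> \<in> D" "real K < norm (Slim \<beta> \<omega>)"
                using dense_exceed[OF D(3) D(2) elim(1) a] by blast
              thus False using nD by force
            qed
            hence "path_dist A (\<lambda>\<alpha>. Slim \<alpha> \<omega>) (\<lambda>_. 0) \<le> real K" by (rule pd_le[OF Ane])
            hence "g (\<lambda>\<alpha>. Slim \<alpha> \<omega>) = 0" by (simp add: g_def)
            thus ?thesis by simp
          qed
        qed
      qed
      have ev1: "eventually (\<lambda>T. outer_exp M (\<lambda>\<omega>. g (\<lambda>\<alpha>. XT T \<alpha> \<omega>)) < \<eta>) sequentially"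
        using order_tendstoD(2)[OF gconv, of \<eta>] oN K \<eta> by linarith
      have sq: "filterlim (\<lambda>T. sqrt (real T)) at_top sequentially"
        by (rule filterlim_compose[OF sqrt_at_top filterlim_real_sequentially])
      have ev2: "eventually (\<lambda>T. 2 * (real K + 1) / (c * \<delta>) \<le> sqrt (real T)) sequentially"
        using sq unfolding filterlim_at_top by blast
      have ev3: "eventually (\<lambda>T. (1::nat) \<le> T) sequentially" by (rule eventually_ge_at_top)
      show "eventually (\<lambda>T. dist (measure M (E T)) 0 < \<eta>) sequentially"
        using ev1 ev2 ev3
      proof eventually_elim
        case (elim T)
        have cd: "c * \<delta> > 0" using c \<delta> by simp
        have rK: "real K + 1 \<le> c * \<delta> * sqrt (real T) / 2"
          using elim(2) cd by (simp add: field_simps)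
        have "E T = Ev T (c * \<delta> * sqrt (real T) / 2)" using elim(3) by (simp add: E_def)
        also have "\<dots> \<subseteq> Ev T (real K + 1)" using rK unfolding Ev_def by force
        finally have "measure M (E T) \<le> measure M (Ev T (real K + 1))"
          using Evm by (intro M.finite_measure_mono) auto
        also have "\<dots> \<le> outer_exp M (\<lambda>\<omega>. g (\<lambda>\<alpha>. XT T \<alpha> \<omega>))"
        proof (rule outer_ge[OF probM Evm])
          show "\<forall>\<omega>\<in>space M. 0 \<le> g (\<lambda>\<alpha>. XT T \<alpha> \<omega>) \<and> g (\<lambda>\<alpha>. XT T \<alpha> \<omega>) \<le> 1" using g01 by blast
          show "\<forall>\<omega>\<in>Ev T (real K + 1). 1 \<le> g (\<lambda>\<alpha>. XT T \<alpha> \<omega>)"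
          proof
            fix \<omega> assume "\<omega> \<in> Ev T (real K + 1)"
            then obtain \<beta> where w: "\<omega> \<in> space M" and b: "\<beta> \<in> D" "real K + 1 < norm (XT T \<beta> \<omega>)"
              unfolding Ev_def by blast
            have "norm (XT T \<beta> \<omega>) \<le> path_dist A (\<lambda>\<alpha>. XT T \<alpha> \<omega>) (\<lambda>_. 0)"
              using pd_ge[OF A_compact XTcont[OF w]] b D(2) by blast
            thus "1 \<le> g (\<lambda>\<alpha>. XT T \<alpha> \<omega>)" using b by (simp add: g_def)
          qed
        qed
        finally show ?case using elim(1) by simp
      qed
    qed
    have "uo_p M (\<lambda>T. A) diff" unfolding uo_p_def
    proof (intro allI impI)
      fix \<epsilon> :: real assume e: "\<epsilon> > 0"
      have "\<forall>T. E T \<in> sets M \<and> {\<omega>\<in>space M. \<exists>i\<in>A. \<epsilon> < \<bar>diff T i \<omega>\<bar>} \<subseteq> E T"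
        using Em incl[OF e] by blast
      thus "\<exists>E. (\<forall>T. E T \<in> sets M \<and> {\<omega> \<in> space M. \<exists>i\<in>A. \<epsilon> < \<bar>diff T i \<omega>\<bar>} \<subseteq> E T) \<and>
          (\<lambda>T. measure M (E T)) \<longlonglongrightarrow> 0" using lim by blast
    qed
    thus ?thesis unfolding diff_def .
  qed
qed

end
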